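(* Let $S$ be a semigroup and $p$ an ultrafilter on $S$. If $p$ is a regular strongly productive ultrafilter, then $p$ is idempotent.
   Context: For a sequence $\vec{x}=(x_n)_{n\in\omega}$ in $S$, $\mathrm{FP}(\vec{x})$ is the set of all products $\prod_{i\in a}x_i$ (in increasing order of indices), $a$ ranging over finite nonempty subsets of $\omega$, and $\mathrm{FP}_k(\vec{x})=\mathrm{FP}((x_{n+k})_{n\in\omega})$. An ultrafilter $p$ on $S$ is strongly productive if every $A\in p$ contains some $\mathrm{FP}(\vec{x})$ which belongs to $p$. A nonprincipal strongly productive ultrafilter $p$ is regular if there is $B\in p$ such that for every sequence $\vec{x}$ with $\mathrm{FP}(\vec{x})\subseteq B$, the set $x_0\mathrm{FP}_1(\vec{x})$ does not belong to $p$. An ultrafilter $p$ is idempotent if for every $A\in p$ the set $\{x\in S: x^{-1}A\in p\}$ belongs to $p$, where $x^{-1}A=\{y\in S: xy\in A\}$. *)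

theory Defs
  imports Main
begin

definition is_ultrafilter :: "'a set set \<Rightarrow> bool" where
  "is_ultrafilter p \<longleftrightarrow>
     UNIV \<in> p \<and> {} \<notin> p \<and>
     (\<forall>A B. A \<in> p \<longrightarrow> A \<subseteq> B \<longrightarrow> B \<in> p) \<and>
     (\<forall>A B. A \<in> p \<longrightarrow> B \<in> p \<longrightarrow> A \<inter> B \<in> p) \<and>
     (\<forall>A. A \<in> p \<or> - A \<in> p)"

definition nonprincipal :: "'a set set \<Rightarrow> bool" where
  "nonprincipal p \<longleftrightarrow> (\<forall>x. {x} \<notin> p)"

fun lprod :: "(nat \<Rightarrow> 'a::semigroup_mult) \<Rightarrow> nat list \<Rightarrow> 'a" where
  "lprod x [i] = x i"
| "lprod x (i # j # is) = x i * lprod x (j # is)"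

definition FP :: "(nat \<Rightarrow> 'a::semigroup_mult) \<Rightarrow> 'a set" where
  "FP x = {lprod x (sorted_list_of_set a) | a. finite a \<and> a \<noteq> {}}"

definition FPk :: "nat \<Rightarrow> (nat \<Rightarrow> 'a::semigroup_mult) \<Rightarrow> 'a set" where
  "FPk k x = FP (\<lambda>n. x (n + k))"

definition strongly_productive :: "'a::semigroup_mult set set \<Rightarrow> bool" where
  "strongly_productive p \<longleftrightarrow> (\<forall>A\<in>p. \<exists>x. FP x \<subseteq> A \<and> FP x \<in> p)"

definition regular_sp :: "'a::semigroup_mult set set \<Rightarrow> bool" where
  "regular_sp p \<longleftrightarrow> nonprincipal p \<and> strongly_productive p \<and>
     (\<exists>B\<in>p. \<forall>x. FP x \<subseteq> B \<longrightarrow> ((\<lambda>y. x 0 * y) ` FPk 1 x) \<notin> p)"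

definition idempotent_uf :: "'a::semigroup_mult set set \<Rightarrow> bool" where
  "idempotent_uf p \<longleftrightarrow> (\<forall>A\<in>p. {s. {t. s * t \<in> A} \<in> p} \<in> p)"

end

theory Submission
  imports Defs
begin

lemma lprod_append:
  "l1 \<noteq> [] \<Longrightarrow> l2 \<noteq> [] \<Longrightarrow> lprod x (l1 @ l2) = lprod x l1 * lprod x l2"
proof (induction l1)
  case Nil then show ?case by simp
next
  case (Cons a l1)
  show ?case
  proof (cases l1)
    case Nil
    then show ?thesis using Cons.prems by (cases l2) auto
  next
    case (Cons b l)
    then show ?thesis using Cons.IH Cons.prems by (simp add: mult.assoc)
  qed
qed

lemma lprod_shift: "l \<noteq> [] \<Longrightarrow> lprod (\<lambda>n. x (n + k)) l = lprod x (map (\<lambda>n. n + k) l)"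
proof (induction l)
  case Nil then show ?case by simp
next
  case (Cons a l) then show ?case by (cases l) auto
qed

lemma sl_image_shift:
  assumes "finite a"
  shows "sorted_list_of_set ((\<lambda>n. n + (k::nat)) ` a) = map (\<lambda>n. n + k) (sorted_list_of_set a)"
proof -
  have "sorted (map (\<lambda>n. n + k) (sorted_list_of_set a))"
    by (simp add: sorted_map)
  moreover have "distinct (map (\<lambda>n. n + k) (sorted_list_of_set a))"
    by (simp add: distinct_map inj_on_def)
  moreover have "set (map (\<lambda>n. n + k) (sorted_list_of_set a)) = (\<lambda>n. n + k) ` a"
    using assms by simp
  ultimately show ?thesis using assms
    by (intro sorted_distinct_set_unique) (simp_all only: sorted_sorted_list_of_set distinct_sorted_list_of_set set_sorted_list_of_set finite_imageI)
qed

lemma sl_union: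
  assumes "finite a" "finite b" "\<forall>i\<in>a. \<forall>j\<in>b. i < (j::nat)"
  shows "sorted_list_of_set (a \<union> b) = sorted_list_of_set a @ sorted_list_of_set b"
proof -
  have "sorted (sorted_list_of_set a @ sorted_list_of_set b)"
    using assms by (auto simp: sorted_append less_imp_le)
  moreover have "distinct (sorted_list_of_set a @ sorted_list_of_set b)"
    using assms by auto
  moreover have "set (sorted_list_of_set a @ sorted_list_of_set b) = a \<union> b"
    using assms by simp
  ultimately show ?thesis using assms
    by (intro sorted_distinct_set_unique) (simp_all only: sorted_sorted_list_of_set distinct_sorted_list_of_set set_sorted_list_of_set finite_UnI)
qed

lemma FPk_char:
  "FPk k x = {lprod x (sorted_list_of_set a) | a. finite a \<and> a \<noteq> {} \<and> (\<forall>i\<in>a. k \<le> i)}"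
proof (rule set_eqI, rule iffI)
  fix y assume "y \<in> FPk k x"
  then obtain a where a: "finite a" "a \<noteq> {}" "y = lprod (\<lambda>n. x (n + k)) (sorted_list_of_set a)"
    unfolding FPk_def FP_def by auto
  have ne: "sorted_list_of_set a \<noteq> []" using a(1,2) by simp
  have "y = lprod x (sorted_list_of_set ((\<lambda>n. n + k) ` a))"
    unfolding sl_image_shift[OF a(1)] a(3) by (rule lprod_shift[OF ne])
  moreover have "finite ((\<lambda>n. n + k) ` a)" "(\<lambda>n. n + k) ` a \<noteq> {}" "\<forall>i\<in>(\<lambda>n. n + k) ` a. k \<le> i"
    using a by auto
  ultimately show "y \<in> {lprod x (sorted_list_of_set a) | a. finite a \<and> a \<noteq> {} \<and> (\<forall>i\<in>a. k \<le> i)}"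
    by (intro CollectI exI[of _ "(\<lambda>n. n + k) ` a"]) simp
next
  fix y assume "y \<in> {lprod x (sorted_list_of_set a) | a. finite a \<and> a \<noteq> {} \<and> (\<forall>i\<in>a. k \<le> i)}"
  then obtain a where a: "finite a" "a \<noteq> {}" "\<forall>i\<in>a. k \<le> i" "y = lprod x (sorted_list_of_set a)"
    by blast
  define b where "b = (\<lambda>n. n - k) ` a"
  have ab: "(\<lambda>n. n + k) ` b = a"
  proof -
    have "(\<lambda>n. n - k + k) ` a = (\<lambda>n. n) ` a"
      by (rule image_cong) (use a(3) in auto)
    then show ?thesis unfolding b_def image_image by simp
  qed
  have "finite b" "b \<noteq> {}" using a unfolding b_def by auto
  moreover have "y = lprod (\<lambda>n. x (n + k)) (sorted_list_of_set b)"
  proof -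
    have ne: "sorted_list_of_set b \<noteq> []" using \<open>finite b\<close> \<open>b \<noteq> {}\<close> by simp
    have "y = lprod x (sorted_list_of_set ((\<lambda>n. n + k) ` b))" using a(4) ab by simp
    also have "\<dots> = lprod (\<lambda>n. x (n + k)) (sorted_list_of_set b)"
      unfolding sl_image_shift[OF \<open>finite b\<close>] by (rule lprod_shift[OF ne, symmetric])
    finally show ?thesis .
  qed
  ultimately show "y \<in> FPk k x" unfolding FPk_def FP_def
    by (intro CollectI exI[of _ b]) simp
qed

lemma FPkI: "finite a \<Longrightarrow> a \<noteq> {} \<Longrightarrow> \<forall>i\<in>a. k \<le> i \<Longrightarrow> lprod x (sorted_list_of_set a) \<in> FPk k x"
  unfolding FPk_char by (intro CollectI exI[of _ a]) simp

lemma FPI: "finite a \<Longrightarrow> a \<noteq> {} \<Longrightarrow> lprod x (sorted_list_of_set a) \<in> FP x"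
  unfolding FP_def by (intro CollectI exI[of _ a]) simp

lemma FPkE: "y \<in> FPk k x \<Longrightarrow> (\<And>a. finite a \<Longrightarrow> a \<noteq> {} \<Longrightarrow> \<forall>i\<in>a. k \<le> i \<Longrightarrow> y = lprod x (sorted_list_of_set a) \<Longrightarrow> P) \<Longrightarrow> P"
  unfolding FPk_char by blast

lemma FPE: "y \<in> FP x \<Longrightarrow> (\<And>a. finite a \<Longrightarrow> a \<noteq> {} \<Longrightarrow> y = lprod x (sorted_list_of_set a) \<Longrightarrow> P) \<Longrightarrow> P"
  unfolding FP_def by blast

lemma FPk_sub: "FPk k x \<subseteq> FP x"
  by (auto elim!: FPkE intro!: FPI)

lemma FP_decomp: "FP x \<subseteq> {x 0} \<union> FPk 1 x \<union> (\<lambda>y. x 0 * y) ` FPk 1 x"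
proof
  fix y assume "y \<in> FP x"
  then obtain a where a: "finite a" "a \<noteq> {}" "y = lprod x (sorted_list_of_set a)"
    by (rule FPE) blast
  show "y \<in> {x 0} \<union> FPk 1 x \<union> (\<lambda>y. x 0 * y) ` FPk 1 x"
  proof (cases "0 \<in> a")
    case False
    then have "\<forall>i\<in>a. 1 \<le> i" by (metis less_one not_le)
    then have "y \<in> FPk 1 x" using a by (simp add: FPkI)
    then show ?thesis by blast
  next
    case True
    show ?thesis
    proof (cases "a = {0}")
      case True then show ?thesis using a by simp
    next
      case False
      let ?c = "a - {0}"
      have c: "finite ?c" "?c \<noteq> {}" "\<forall>i\<in>?c. 1 \<le> i" using a False \<open>0 \<in> a\<close> by auto
      have "a = {0} \<union> ?c" using \<open>0 \<in> a\<close> by auto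
      then have "sorted_list_of_set a = [0] @ sorted_list_of_set ?c"
        using sl_union[of "{0}" ?c] c by auto
      then have "y = x 0 * lprod x (sorted_list_of_set ?c)"
        using a(3) c lprod_append[of "[0]" "sorted_list_of_set ?c" x] by simp
      moreover have "lprod x (sorted_list_of_set ?c) \<in> FPk 1 x"
        using c by (simp add: FPkI)
      ultimately show ?thesis by blast
    qed
  qed
qed

lemma FP_absorb:
  assumes "y \<in> FP x"
  shows "\<exists>n. \<forall>w\<in>FPk n x. y * w \<in> FP x"
proof -
  obtain a where a: "finite a" "a \<noteq> {}" "y = lprod x (sorted_list_of_set a)"
    using assms by (rule FPE) blast
  have "\<forall>w\<in>FPk (Suc (Max a)) x. y * w \<in> FP x"
  proof
    fix w assume "w \<in> FPk (Suc (Max a)) x"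
    then obtain b where b: "finite b" "b \<noteq> {}" "\<forall>i\<in>b. Suc (Max a) \<le> i"
      "w = lprod x (sorted_list_of_set b)" by (rule FPkE) blast
    have lt: "\<forall>i\<in>a. \<forall>j\<in>b. i < j" using a b(3)
      by (meson Max_ge le_imp_less_Suc order_less_le_trans)
    have "y * w = lprod x (sorted_list_of_set (a \<union> b))"
      using sl_union[OF a(1) b(1) lt] lprod_append[of "sorted_list_of_set a" "sorted_list_of_set b" x] a b by simp
    then show "y * w \<in> FP x" using a b by (simp add: FPI)
  qed
  then show ?thesis by blast
qed

lemma uf_props:
  assumes "is_ultrafilter p"
  shows "{} \<notin> p" "\<And>A B. A \<in> p \<Longrightarrow> A \<subseteq> B \<Longrightarrow> B \<in> p"
    "\<And>A B. A \<in> p \<Longrightarrow> B \<in> p \<Longrightarrow> A \<inter> B \<in> p" "\<And>A. A \<notin> p \<Longrightarrow> - A \<in> p"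
  using assms unfolding is_ultrafilter_def by blast+

lemma uf_three:
  assumes "is_ultrafilter p" "U \<in> p" "U \<subseteq> A \<union> B \<union> C"
  shows "A \<in> p \<or> B \<in> p \<or> C \<in> p"
proof (rule ccontr)
  note u = uf_props[OF assms(1)]
  assume "\<not> ?thesis"
  then have "A \<notin> p" "B \<notin> p" "C \<notin> p" by simp_all
  then have "-A \<in> p" "-B \<in> p" "-C \<in> p" by (simp_all add: u(4))
  then have "U \<inter> -A \<inter> -B \<inter> -C \<in> p" using assms(2) by (simp add: u(3))
  moreover have "U \<inter> -A \<inter> -B \<inter> -C = {}" using assms(3) by blast
  ultimately show False using u(1) by simp
qed

theorem mainTheorem3:
  fixes p :: "'a::semigroup_mult set set"
  assumes "is_ultrafilter p"
    and "regular_sp p"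
  shows "idempotent_uf p"
  unfolding idempotent_uf_def
proof
  fix A assume "A \<in> p"
  note uf0 = uf_props[OF assms(1)]
  have uf: "True" "{} \<notin> p" "\<And>A B. A \<in> p \<Longrightarrow> A \<subseteq> B \<Longrightarrow> B \<in> p"
    "\<And>A B. A \<in> p \<Longrightarrow> B \<in> p \<Longrightarrow> A \<inter> B \<in> p"
    using uf0 by auto
  obtain B where B: "B \<in> p" "\<And>x. FP x \<subseteq> B \<Longrightarrow> ((\<lambda>y. x 0 * y) ` FPk 1 x) \<notin> p"
    using assms(2) unfolding regular_sp_def by blast
  have np: "\<And>s. {s} \<notin> p" using assms(2) unfolding regular_sp_def nonprincipal_def by blast
  have "A \<inter> B \<in> p" using uf(4) \<open>A \<in> p\<close> B(1) by blast
  then obtain x where x: "FP x \<subseteq> A \<inter> B" "FP x \<in> p"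
    using assms(2) unfolding regular_sp_def strongly_productive_def by blast
  have all: "FPk k x \<in> p" for k
  proof (induction k)
    case 0 then show ?case using x(2) by (simp add: FPk_def)
  next
    case (Suc k)
    define z where "z = (\<lambda>n. x (n + k))"
    have FPz: "FP z = FPk k x" unfolding z_def FPk_def by simp
    have FPz1: "FPk 1 z = FPk (Suc k) x" unfolding z_def FPk_def by (simp add: ac_simps)
    have "FP z \<subseteq> B" using FPz FPk_sub[of k x] x(1) by blast
    then have n1: "(\<lambda>y. z 0 * y) ` FPk 1 z \<notin> p" by (rule B(2))
    have "FP z \<in> p" using FPz Suc.IH by simp
    then have "{z 0} \<in> p \<or> FPk 1 z \<in> p \<or> (\<lambda>y. z 0 * y) ` FPk 1 z \<in> p"
      using uf_three[OF assms(1) _ FP_decomp] by blast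
    then show ?case using np n1 FPz1 by auto
  qed
  have "FP x \<subseteq> {s. {t. s * t \<in> A} \<in> p}"
  proof
    fix y assume "y \<in> FP x"
    then obtain n where n: "\<forall>w\<in>FPk n x. y * w \<in> FP x" using FP_absorb by blast
    then have "FPk n x \<subseteq> {t. y * t \<in> A}" using x(1) by blast
    then show "y \<in> {s. {t. s * t \<in> A} \<in> p}" using uf(3) all by blast
  qed
  then show "{s. {t. s * t \<in> A} \<in> p} \<in> p" using uf(3) x(2) by blast
qed

end
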